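(* Let $\tau=\frac{1+\sqrt5}{2}$, $\tau'=\frac{1-\sqrt5}{2}$, $\mathbb{Z}[\tau]=\{a+b\tau: a,b\in\mathbb{Z}\}$ and $\mathbb{Z}[\tau]^-=\{x\in\mathbb{Z}[\tau]: x\le 0\}$ (as a real number). For $k\in\{2,3,4\}$ let $A_k$ be the $k\times k$ matrix $$A_2=\begin{pmatrix}2&-\tau\\-\tau&2\end{pmatrix},\quad A_3=\begin{pmatrix}2&-1&0\\-1&2&-\tau\\0&-\tau&2\end{pmatrix},\quad A_4=\begin{pmatrix}2&-1&0&0\\-1&2&-1&0\\0&-1&2&-\tau\\0&0&-\tau&2\end{pmatrix}.$$ Consider $(k+1)\times(k+1)$ matrices of the form $\begin{pmatrix}2&a^T\\ a&A_k\end{pmatrix}$ with $a\in(\mathbb{Z}[\tau]^-)^k$ (a column vector). Then, for each $k\in\{2,3,4\}$, there is exactly one such matrix with determinant $0$, namely the one with $a=(\tau',\tau')^T$ for $k=2$, $a=(0,\tau',0)^T$ for $k=3$, and $a=(\tau',0,0,0)^T$ for $k=4$.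
   Context: $A_2,A_3,A_4$ are the Cartan matrices of the noncrystallographic Coxeter groups $H_2,H_3,H_4$ (with a fixed ordering of simple roots); the matrices in the conclusion are the extended Cartan matrices of their affine extensions. A generalized (extended) Cartan matrix $(a_{ij})$ here is required to satisfy $a_{ii}=2$, $a_{ij}=a_{ji}$, $a_{ij}\in\mathbb{Z}[\tau]^-$ for $i\ne j$, and $\det(a_{ij})=0$. *)

theory Defs
  imports Complex_Main "Jordan_Normal_Form.Determinant"
begin

definition tau :: real where "tau = (1 + sqrt 5) / 2"
definition tau' :: real where "tau' = (1 - sqrt 5) / 2"

definition Ztau :: "real set" where
  "Ztau = {of_int a + of_int b * tau | a b. True}"

definition Ztau_neg :: "real set" where
  "Ztau_neg = {x \<in> Ztau. x \<le> 0}"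

definition A2 :: "real mat" where
  "A2 = mat_of_rows_list 2 [[2, -tau], [-tau, 2]]"
definition A3 :: "real mat" where
  "A3 = mat_of_rows_list 3 [[2, -1, 0], [-1, 2, -tau], [0, -tau, 2]]"
definition A4 :: "real mat" where
  "A4 = mat_of_rows_list 4 [[2, -1, 0, 0], [-1, 2, -1, 0], [0, -1, 2, -tau], [0, 0, -tau, 2]]"

definition bordered :: "real mat \<Rightarrow> real vec \<Rightarrow> real mat" where
  "bordered A a = mat (dim_row A + 1) (dim_row A + 1)
     (\<lambda>(i, j). if i = 0 \<and> j = 0 then 2
               else if i = 0 then a $ (j - 1)
               else if j = 0 then a $ (i - 1)
               else A $$ (i - 1, j - 1))"

definition affine_solutions :: "real mat \<Rightarrow> nat \<Rightarrow> real vec set" where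
  "affine_solutions A k = {a \<in> carrier_vec k. (\<forall>i<k. a $ i \<in> Ztau_neg) \<and> det (bordered A a) = 0}"

end

theory Submission
  imports Defs
begin

fun detf :: "nat \<Rightarrow> (nat \<Rightarrow> nat \<Rightarrow> 'a::comm_ring_1) \<Rightarrow> 'a" where
  "detf 0 f = 1"
| "detf (Suc n) f = (\<Sum>j<Suc n. (-1)^j * f 0 j * detf n (\<lambda>i k. f (Suc i) (if k < j then k else Suc k)))"

lemma det_detf: "det (mat n n (\<lambda>(i,j). f i j)) = detf n f"
proof (induction n arbitrary: f)
  case 0
  then show ?case by (simp add: det_def')
next
  case (Suc n)
  have A: "mat (Suc n) (Suc n) (\<lambda>(i,j). f i j) \<in> carrier_mat (Suc n) (Suc n)" by simp
  have "det (mat (Suc n) (Suc n) (\<lambda>(i,j). f i j)) =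
     (\<Sum>j<Suc n. f 0 j * cofactor (mat (Suc n) (Suc n) (\<lambda>(i,j). f i j)) 0 j)"
    by (subst laplace_expansion_row[OF A, of 0]) auto
  also have "\<dots> = (\<Sum>j<Suc n. (-1)^j * f 0 j * detf n (\<lambda>i k. f (Suc i) (if k < j then k else Suc k)))"
  proof (rule sum.cong[OF refl])
    fix j assume j: "j \<in> {..<Suc n}"
    have "mat_delete (mat (Suc n) (Suc n) (\<lambda>(i,j). f i j)) 0 j
       = mat n n (\<lambda>(i,k). f (Suc i) (if k < j then k else Suc k))"
      by (rule eq_matI) (auto simp: mat_delete_def)
    then show "f 0 j * cofactor (mat (Suc n) (Suc n) (\<lambda>(i,j). f i j)) 0 j =
      (-1)^j * f 0 j * detf n (\<lambda>i k. f (Suc i) (if k < j then k else Suc k))"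
      by (simp add: cofactor_def Suc.IH)
  qed
  finally show ?case by simp
qed

lemma detf_num: "detf (numeral n) f = detf (Suc (pred_numeral n)) f" by (simp add: numeral_eq_Suc)

lemma mrl_idx[simp]: "i < length rs \<Longrightarrow> j < nc \<Longrightarrow> mat_of_rows_list nc rs $$ (i,j) = rs!i!j"
  by (simp add: mat_of_rows_list_def)
lemma dims[simp]: "dim_row A2 = 2" "dim_row A3 = 3" "dim_row A4 = 4"
  by (simp_all add: A2_def A3_def A4_def mat_of_rows_list_def)

lemma tsq: "tau * tau = tau + 1"
  unfolding tau_def by (simp add: field_simps)
lemma ttau: "tau*(tau*z) = tau*z + z"
  using tsq by (metis mult.assoc distrib_right mult_1)
lemma taup: "tau' = 1 - tau"
  unfolding tau_def tau'_def by (simp add: field_simps)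
lemma sqrt5_lo: "2236/1000 < sqrt (5::real)" by (rule real_less_rsqrt) (simp add: power2_eq_square)
lemma sqrt5_hi: "sqrt (5::real) < 22362/10000" by (rule real_less_lsqrt) (simp_all add: power2_eq_square)
lemma t1: "1618/1000 < tau" using sqrt5_lo unfolding tau_def by simp
lemma t2: "tau < 16181/10000" using sqrt5_hi unfolding tau_def by simp

lemma Ztau_neg_0: "0 \<in> Ztau_neg"
  unfolding Ztau_neg_def Ztau_def by (auto intro!: exI[of _ 0])
lemma Ztau_neg_tau': "tau' \<in> Ztau_neg"
proof -
  have "tau' = of_int 1 + of_int (-1) * tau" using taup by simp
  moreover have "tau' \<le> 0" using taup t1 by simp
  ultimately show ?thesis unfolding Ztau_neg_def Ztau_def by blast
qed

lemma sosb1: fixes C d1 l1 dl y :: real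
  assumes eq: "C = d1*l1^2 + dl*y^2" and "0 \<le> d1" "0 < dl" "C \<le> 4*dl" shows "y*y \<le> 4"
proof -
  have "0 \<le> d1*l1^2" using assms by simp
  then have "dl * y^2 \<le> dl * 4" using assms by linarith
  then have "y^2 \<le> 4" using assms by simp
  then show ?thesis by (simp add: power2_eq_square)
qed
lemma sosb2: fixes C d1 l1 d2 l2 dl y :: real
  assumes eq: "C = d1*l1^2 + d2*l2^2 + dl*y^2" and "0 \<le> d1" "0 \<le> d2" "0 < dl" "C \<le> 4*dl" shows "y*y \<le> 4"
proof -
  have "0 \<le> d1*l1^2" "0 \<le> d2*l2^2" using assms by simp_all
  then have "dl * y^2 \<le> dl * 4" using assms by linarith
  then have "y^2 \<le> 4" using assms by simp
  then show ?thesis by (simp add: power2_eq_square)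
qed
lemma sosb3: fixes C d1 l1 d2 l2 d3 l3 dl y :: real
  assumes eq: "C = d1*l1^2 + d2*l2^2 + d3*l3^2 + dl*y^2" and "0 \<le> d1" "0 \<le> d2" "0 \<le> d3" "0 < dl" "C \<le> 4*dl" shows "y*y \<le> 4"
proof -
  have "0 \<le> d1*l1^2" "0 \<le> d2*l2^2" "0 \<le> d3*l3^2" using assms by simp_all
  then have "dl * y^2 \<le> dl * 4" using assms by linarith
  then have "y^2 \<le> 4" using assms by simp
  then show ?thesis by (simp add: power2_eq_square)
qed


lemma no_int_sol_aux: "\<forall>e w. \<bar>w\<bar> = int n \<longrightarrow> e*e + e*w - w*w = (0::int) \<longrightarrow> w = 0"
proof (induction n rule: less_induct)
  case (less n)
  show ?case
  proof (intro allI impI)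
    fix e w :: int assume on: "\<bar>w\<bar> = int n" and eq: "e*e + e*w - w*w = 0"
    have we: "even w"
    proof (rule ccontr)
      assume "odd w"
      moreover have "even (e*(e+w))" using \<open>odd w\<close> by (cases "even e") auto
      moreover have "e*(e+w) = w*w" using eq by (simp add: algebra_simps)
      ultimately show False by simp
    qed
    have ee: "even e"
    proof -
      have "e*e = w*w - e*w" using eq by simp
      moreover have "even (w*w - e*w)" using we by simp
      ultimately have "even (e*e)" by simp
      then show ?thesis by simp
    qed
    show "w = 0"
    proof (rule ccontr)
      assume w0: "w \<noteq> 0"
      obtain e' where e': "e = 2*e'" using ee by blast
      obtain w' where w': "w = 2*w'" using we by blast
      have "e'*e' + e'*w' - w'*w' = 0" using eq e' w' by (simp add: algebra_simps)
      moreover have "nat \<bar>w'\<bar> < n" using on w' w0 by auto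
      moreover have "\<bar>w'\<bar> = int (nat \<bar>w'\<bar>)" by simp
      ultimately have "w' = 0" using less.IH by blast
      then show False using w' w0 by simp
    qed
  qed
qed

lemma tau_irr:
  fixes e w :: int and t :: real
  assumes t: "t*t = t + 1" and eq: "real_of_int e + real_of_int w * t = 0"
  shows "e = 0 \<and> w = 0"
proof -
  have tw: "real_of_int w * t = - e" using eq by simp
  have "real_of_int (e*e + e*w - w*w) = 0"
  proof -
    have "(real_of_int w * t) * (real_of_int w * t) = e*e" using tw by simp
    then have "real_of_int w * w * (t*t) = e*e" by (simp add: algebra_simps)
    then have "real_of_int w * w * (t + 1) = e*e" using t by simp
    then have "real_of_int w * (w*t) + w*w = e*e" by (simp add: algebra_simps)
    then have "real_of_int w * (- e) + w*w = e*e" using tw by (simp add: mult.commute)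
    then show ?thesis by (simp add: algebra_simps)
  qed
  then have "e*e + e*w - w*w = 0" by (simp only: of_int_eq_0_iff)
  then have "w = 0" using no_int_sol_aux[of "nat \<bar>w\<bar>"] by force
  then show ?thesis using eq by simp
qed

lemma qrange:
  fixes q :: int and t :: real
  assumes t1: "1618/1000 < t" and t2: "t < 16181/10000"
    and l: "-(13/4) \<le> real_of_int q * (2*t-1)" and u: "real_of_int q*(2*t-1) \<le> 2"
  shows "q = 0 \<or> q = -1"
proof -
  have "q \<le> 0"
  proof (rule ccontr)
    assume "\<not> q \<le> 0"
    then have "real_of_int q \<ge> 1" by simp
    then have "real_of_int q * (2*t-1) \<ge> 1 * (2*t-1)" using t1 by (intro mult_right_mono) auto
    then have "2*t-1 \<le> 2" using u by simp
    then show False using t1 by simp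
  qed
  moreover have "q \<ge> -1"
  proof (rule ccontr)
    assume "\<not> q \<ge> -1"
    then have "real_of_int q \<le> -2" by simp
    then have "real_of_int q * (2*t-1) \<le> -2 * (2*t-1)" using t1 by (intro mult_right_mono) auto
    then have "-(13/4) \<le> -2 * (2*t-1)" using l by simp
    then show False using t1 by simp
  qed
  ultimately show ?thesis by auto
qed

lemma sq_bound: fixes x B K :: real assumes "x \<le> 0" "x*x \<le> K" "K \<le> B*B" "0 \<le> B" shows "-B \<le> x"
proof (rule ccontr)
  assume "\<not> -B \<le> x"
  then have "B < -x" by simp
  then have "B*B < (-x)*(-x)" using assms by (intro mult_strict_mono) auto
  then show False using assms by simp
qed

lemma abs_bound: fixes y :: real assumes "y*y \<le> 4" shows "-2 \<le> y \<and> y \<le> 2"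
proof -
  have "\<bar>y\<bar> \<le> 2"
  proof (rule ccontr)
    assume "\<not> \<bar>y\<bar> \<le> 2"
    then have "2*2 < \<bar>y\<bar> * \<bar>y\<bar>" by (intro mult_strict_mono) auto
    then show False using assms by simp
  qed
  then show ?thesis by auto
qed

lemma cand_common:
  fixes p q :: int and t B :: real
  assumes t1: "1618/1000 < t" and t2: "t < 16181/10000"
    and x1: "-B \<le> p + q*t" and x2: "p + q*t \<le> 0" and B: "B \<le> 5/4"
    and y: "-2 \<le> p + q*(1-t)" "p + q*(1-t) \<le> 2"
  shows "(q = 0 \<and> -B \<le> p \<and> p \<le> 0) \<or> (q = -1 \<and> -B \<le> p - t \<and> -2 \<le> p - 1 + t \<and> p \<le> 2)"
proof -
  have "real_of_int q * (2*t-1) = (p + q*t) - (p + q*(1-t))" by (simp add: algebra_simps)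
  then have "q = 0 \<or> q = -1" using qrange[OF t1 t2] x1 x2 y B by auto
  then show ?thesis using x1 x2 y by auto
qed

lemma cand3:
  fixes p q :: int and t :: real
  assumes t1: "1618/1000 < t" and t2: "t < 16181/10000"
    and x: "p + q*t \<le> 0" "(p + q*t)*(p + q*t) \<le> 3/2" and y: "(p + q*(1-t))*(p + q*(1-t)) \<le> 4"
  shows "(p = 0 \<and> q = 0) \<or> (p = -1 \<and> q = 0) \<or> (p = 1 \<and> q = -1)"
proof -
  have b: "-(5/4) \<le> p + q*t" by (rule sq_bound[OF x(1) x(2)]) auto
  have "(q = 0 \<and> -(5/4) \<le> p \<and> p \<le> 0) \<or> (q = -1 \<and> -(5/4) \<le> p - t \<and> -2 \<le> p - 1 + t \<and> p \<le> 2)"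
    using cand_common[OF t1 t2 b x(1) _ abs_bound[OF y, THEN conjunct1] abs_bound[OF y, THEN conjunct2]] by simp
  then show ?thesis
  proof
    assume "q = 0 \<and> -(5/4) \<le> p \<and> p \<le> 0"
    then have "q = 0" "-2 < p" "p \<le> 0" by linarith+
    then show ?thesis by auto
  next
    assume h: "q = -1 \<and> -(5/4) \<le> p - t \<and> -2 \<le> p - 1 + t \<and> p \<le> 2"
    have "p - t \<le> 0" using x(1) h by simp
    then have "real_of_int p < 2" using t2 by linarith
    moreover have "real_of_int p > 0" using h t1 t2 by linarith
    ultimately have "p = 1" by simp
    then show ?thesis using h by auto
  qed
qed

lemma cand2:
  fixes p q :: int and t :: real
  assumes t1: "1618/1000 < t" and t2: "t < 16181/10000"
    and x: "p + q*t \<le> 0" "(p + q*t)*(p + q*t) \<le> 9/10" and y: "(p + q*(1-t))*(p + q*(1-t)) \<le> 4"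
  shows "(p = 0 \<and> q = 0) \<or> (p = 1 \<and> q = -1)"
proof -
  have b: "-(19/20) \<le> p + q*t" by (rule sq_bound[OF x(1) x(2)]) auto
  have "(q = 0 \<and> -(19/20) \<le> p \<and> p \<le> 0) \<or> (q = -1 \<and> -(19/20) \<le> p - t \<and> -2 \<le> p - 1 + t \<and> p \<le> 2)"
    using cand_common[OF t1 t2 b x(1) _ abs_bound[OF y, THEN conjunct1] abs_bound[OF y, THEN conjunct2]] by simp
  then show ?thesis
  proof
    assume "q = 0 \<and> -(19/20) \<le> p \<and> p \<le> 0"
    then have "q = 0" "-1 < p" "p \<le> 0" by linarith+
    then show ?thesis by auto
  next
    assume h: "q = -1 \<and> -(19/20) \<le> p - t \<and> -2 \<le> p - 1 + t \<and> p \<le> 2"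
    have "p - t \<le> 0" using x(1) h by simp
    then have "real_of_int p < 2" using t2 by linarith
    moreover have "real_of_int p > 0" using h t1 t2 by linarith
    ultimately have "p = 1" by simp
    then show ?thesis using h by auto
  qed
qed

lemma cand1:
  fixes p q :: int and t :: real
  assumes t1: "1618/1000 < t" and t2: "t < 16181/10000"
    and x: "p + q*t \<le> 0" "(p + q*t)*(p + q*t) \<le> 1/5" and y: "(p + q*(1-t))*(p + q*(1-t)) \<le> 4"
  shows "p = 0 \<and> q = 0"
proof -
  have b: "-(9/20) \<le> p + q*t" by (rule sq_bound[OF x(1) x(2)]) auto
  have "(q = 0 \<and> -(9/20) \<le> p \<and> p \<le> 0) \<or> (q = -1 \<and> -(9/20) \<le> p - t \<and> -2 \<le> p - 1 + t \<and> p \<le> 2)"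
    using cand_common[OF t1 t2 b x(1) _ abs_bound[OF y, THEN conjunct1] abs_bound[OF y, THEN conjunct2]] by simp
  then show ?thesis
  proof
    assume "q = 0 \<and> -(9/20) \<le> p \<and> p \<le> 0"
    then have "q = 0" "-1 < p" "p \<le> 0" by linarith+
    then show ?thesis by auto
  next
    assume h: "q = -1 \<and> -(9/20) \<le> p - t \<and> -2 \<le> p - 1 + t \<and> p \<le> 2"
    have "p - t \<le> 0" using x(1) h by simp
    then have "real_of_int p < 2" using t2 by linarith
    moreover have "real_of_int p > 1" using h t1 t2 by linarith
    ultimately show ?thesis by simp
  qed
qed

lemma bnd: fixes m z c K :: real assumes "0 < m" "m * z \<le> c" "c \<le> K * m" shows "z \<le> K"
  using assms by (metis mult.commute mult_le_cancel_left_pos order_trans)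


lemma EO2: fixes t pa qa pb qb :: real assumes "t*t = t+1" shows "(6 + (-2)*t + (-2)*t*(pa + qa*t)*(pb + qb*t) + (-2)*(pa + qa*t)^2 + (-2)*(pb + qb*t)^2) = (6 + (-2)*pa*qb + (-2)*pa^2 + (-2)*pb*qa + (-2)*pb^2 + (-2)*qa*qb + (-2)*qa^2 + (-2)*qb^2) + ((-2) + (-2)*pa*pb + (-4)*pa*qa + (-2)*pa*qb + (-2)*pb*qa + (-4)*pb*qb + (-4)*qa*qb + (-2)*qa^2 + (-2)*qb^2) * t"
  proof -
  have tt: "t*(t*z) = t*z + z" for z using assms by (metis mult.assoc distrib_right mult_1)
  show ?thesis using assms by (simp add: algebra_simps power2_eq_square power3_eq_cube tt)
qed

lemma EOc2: fixes t pa qa pb qb :: real assumes "t*t = t+1" shows "(4 + 2*t + 2*t*(pa + qa*(1-t))*(pb + qb*(1-t)) + (-2)*(pa + qa*(1-t))*(pb + qb*(1-t)) + (-2)*(pa + qa*(1-t))^2 + (-2)*(pb + qb*(1-t))^2) = (6 + (-2)*pa*qb + (-2)*pa^2 + (-2)*pb*qa + (-2)*pb^2 + (-2)*qa*qb + (-2)*qa^2 + (-2)*qb^2) + ((-2) + (-2)*pa*pb + (-4)*pa*qa + (-2)*pa*qb + (-2)*pb*qa + (-4)*pb*qb + (-4)*qa*qb + (-2)*qa^2 + (-2)*qb^2) * (1-t)"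
  proof -
  have tt: "t*(t*z) = t*z + z" for z using assms by (metis mult.assoc distrib_right mult_1)
  show ?thesis using assms by (simp add: algebra_simps power2_eq_square power3_eq_cube tt)
qed

lemma QX2: fixes t xa xb :: real shows "(6 + (-2)*t) - (6 + (-2)*t + (-2)*t*xa*xb + (-2)*xa^2 + (-2)*xb^2) = (2 + 0*t) * (xa*xa) + (0 + 2*t) * (xa*xb) + (2 + 0*t) * (xb*xb)"
  by (simp add: algebra_simps power2_eq_square)

lemma SOS2_0: fixes t xa xb :: real assumes "t*t = t+1" shows "2 * ((4 + 2*t) - (4 + 2*t + 2*t*xa*xb + (-2)*xa*xb + (-2)*xa^2 + (-2)*xb^2)) = (1 + 0*t) * ((2 + 0*t)*xb + (1 + (-1)*t)*xa)^2 + (2 + 1*t) * xa^2"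
  proof -
  have tt: "t*(t*z) = t*z + z" for z using assms by (metis mult.assoc distrib_right mult_1)
  show ?thesis using assms by (simp add: algebra_simps power2_eq_square power3_eq_cube tt)
qed

lemma SOS2_1: fixes t xa xb :: real assumes "t*t = t+1" shows "2 * ((4 + 2*t) - (4 + 2*t + 2*t*xa*xb + (-2)*xa*xb + (-2)*xa^2 + (-2)*xb^2)) = (1 + 0*t) * ((2 + 0*t)*xa + (1 + (-1)*t)*xb)^2 + (2 + 1*t) * xb^2"
  proof -
  have tt: "t*(t*z) = t*z + z" for z using assms by (metis mult.assoc distrib_right mult_1)
  show ?thesis using assms by (simp add: algebra_simps power2_eq_square power3_eq_cube tt)
qed

lemma EO3: fixes t pa qa pb qb pc qc :: real assumes "t*t = t+1" shows "(8 + (-4)*t + (-2)*t*(pa + qa*t)*(pc + qc*t) + t*(pa + qa*t)^2 + (-4)*t*(pb + qb*t)*(pc + qc*t) + (-4)*(pa + qa*t)*(pb + qb*t) + (-3)*(pa + qa*t)^2 + (-4)*(pb + qb*t)^2 + (-3)*(pc + qc*t)^2) = (8 + (-4)*pa*pb + 2*pa*qa + (-2)*pa*qc + (-3)*pa^2 + (-4)*pb*qc + (-4)*pb^2 + (-2)*pc*qa + (-4)*pc*qb + (-3)*pc^2 + (-4)*qa*qb + (-2)*qa*qc + (-2)*qa^2 + (-4)*qb*qc + (-4)*qb^2 + (-3)*qc^2) + ((-4) + (-2)*pa*pc + (-4)*pa*qa + (-4)*pa*qb + (-2)*pa*qc + pa^2 + (-4)*pb*pc + (-4)*pb*qa + (-8)*pb*qb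 + (-4)*pb*qc + (-2)*pc*qa + (-4)*pc*qb + (-6)*pc*qc + (-4)*qa*qb + (-4)*qa*qc + (-1)*qa^2 + (-8)*qb*qc + (-4)*qb^2 + (-3)*qc^2) * t"
  proof -
  have tt: "t*(t*z) = t*z + z" for z using assms by (metis mult.assoc distrib_right mult_1)
  show ?thesis using assms by (simp add: algebra_simps power2_eq_square power3_eq_cube tt)
qed

lemma EOc3: fixes t pa qa pb qb pc qc :: real assumes "t*t = t+1" shows "(4 + 4*t + 2*t*(pa + qa*(1-t))*(pc + qc*(1-t)) + (-1)*t*(pa + qa*(1-t))^2 + 4*t*(pb + qb*(1-t))*(pc + qc*(1-t)) + (-4)*(pa + qa*(1-t))*(pb + qb*(1-t)) + (-2)*(pa + qa*(1-t))*(pc + qc*(1-t)) + (-2)*(pa + qa*(1-t))^2 + (-4)*(pb + qb*(1-t))*(pc + qc*(1-t)) + (-4)*(pb + qb*(1-t))^2 + (-3)*(pc + qc*(1-t))^2) = (8 + (-4)*pa*pb + 2*pa*qa + (-2)*pa*qc + (-3)*pa^2 + (-4)*pb*qc + (-4)*pb^2 + (-2)*pc*qa + (-4)*pc*qb + (-3)*pc^2 + (-4)*qa*qb + (-2)*qa*qc + (-2)*qa^2 + (-4)*qb*qc + (-4)*qb^2 + (-3)*qc^2) + ((-4) + (-2)*pa*pc + (-4)*pa*qa + (-4)*pa*qb + (-2)*pa*qc + pa^2 + (-4)*pb*pc + (-4)*pb*qa + (-8)*pb*qb + (-4)*pb*qc + (-2)*pc*qa + (-4)*pc*qb + (-6)*pc*qc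 + (-4)*qa*qb + (-4)*qa*qc + (-1)*qa^2 + (-8)*qb*qc + (-4)*qb^2 + (-3)*qc^2) * (1-t)"
  proof -
  have tt: "t*(t*z) = t*z + z" for z using assms by (metis mult.assoc distrib_right mult_1)
  show ?thesis using assms by (simp add: algebra_simps power2_eq_square power3_eq_cube tt)
qed

lemma QX3: fixes t xa xb xc :: real shows "(8 + (-4)*t) - (8 + (-4)*t + (-2)*t*xa*xc + t*xa^2 + (-4)*t*xb*xc + (-4)*xa*xb + (-3)*xa^2 + (-4)*xb^2 + (-3)*xc^2) = (3 + (-1)*t) * (xa*xa) + (4 + 0*t) * (xa*xb) + (0 + 2*t) * (xa*xc) + (4 + 0*t) * (xb*xb) + (0 + 4*t) * (xb*xc) + (3 + 0*t) * (xc*xc)"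
  by (simp add: algebra_simps power2_eq_square)

lemma SOS3_0: fixes t xa xb xc :: real assumes "t*t = t+1" shows "1 * ((4 + 4*t) - (4 + 4*t + 2*t*xa*xc + (-1)*t*xa^2 + 4*t*xb*xc + (-4)*xa*xb + (-2)*xa*xc + (-2)*xa^2 + (-4)*xb*xc + (-4)*xb^2 + (-3)*xc^2)) = (1 + 0*t) * ((2 + 0*t)*xb + (1 + (-1)*t)*xc + (1 + 0*t)*xa)^2 + (1 + 1*t) * ((1 + 0*t)*xc + (0 + 0*t)*xa)^2 + (1 + 1*t) * xa^2"
  proof -
  have tt: "t*(t*z) = t*z + z" for z using assms by (metis mult.assoc distrib_right mult_1)
  show ?thesis using assms by (simp add: algebra_simps power2_eq_square power3_eq_cube tt)
qed

lemma SOS3_1: fixes t xa xb xc :: real assumes "t*t = t+1" shows "25 * ((4 + 4*t) - (4 + 4*t + 2*t*xa*xc + (-1)*t*xa^2 + 4*t*xb*xc + (-4)*xa*xb + (-2)*xa*xc + (-2)*xa^2 + (-4)*xb*xc + (-4)*xb^2 + (-3)*xc^2)) = (2 + 1*t) * ((5 + 0*t)*xa + (4 + (-3)*t)*xc + (6 + (-2)*t)*xb)^2 + (10 + 5*t) * ((2 + 0*t)*xc + (1 + (-1)*t)*xb)^2 + (25 + 25*t) * xb^2"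
  proof -
  have tt: "t*(t*z) = t*z + z" for z using assms by (metis mult.assoc distrib_right mult_1)
  show ?thesis using assms by (simp add: algebra_simps power2_eq_square power3_eq_cube tt)
qed

lemma SOS3_2: fixes t xa xb xc :: real assumes "t*t = t+1" shows "25 * ((4 + 4*t) - (4 + 4*t + 2*t*xa*xc + (-1)*t*xa^2 + 4*t*xb*xc + (-4)*xa*xb + (-2)*xa*xc + (-2)*xa^2 + (-4)*xb*xc + (-4)*xb^2 + (-3)*xc^2)) = (2 + 1*t) * ((5 + 0*t)*xa + (6 + (-2)*t)*xb + (4 + (-3)*t)*xc)^2 + (10 + 5*t) * ((2 + 0*t)*xb + (1 + (-1)*t)*xc)^2 + (25 + 25*t) * xc^2"
  proof -
  have tt: "t*(t*z) = t*z + z" for z using assms by (metis mult.assoc distrib_right mult_1)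
  show ?thesis using assms by (simp add: algebra_simps power2_eq_square power3_eq_cube tt)
qed

lemma EO4: fixes t pa qa pb qb pc qc pd qd :: real assumes "t*t = t+1" shows "(10 + (-6)*t + 2*t*(pa + qa*t)*(pb + qb*t) + (-2)*t*(pa + qa*t)*(pd + qd*t) + 2*t*(pa + qa*t)^2 + (-4)*t*(pb + qb*t)*(pd + qd*t) + 2*t*(pb + qb*t)^2 + (-6)*t*(pc + qc*t)*(pd + qd*t) + (-6)*(pa + qa*t)*(pb + qb*t) + (-4)*(pa + qa*t)*(pc + qc*t) + (-4)*(pa + qa*t)^2 + (-8)*(pb + qb*t)*(pc + qc*t) + (-6)*(pb + qb*t)^2 + (-6)*(pc + qc*t)^2 + (-4)*(pd + qd*t)^2) = (10 + (-6)*pa*pb + (-4)*pa*pc + 4*pa*qa + 2*pa*qb + (-2)*pa*qd + (-4)*pa^2 + (-8)*pb*pc + 2*pb*qa + 4*pb*qb + (-4)*pb*qd + (-6)*pb^2 + (-6)*pc*qd + (-6)*pc^2 + (-2)*pd*qa + (-4)*pd*qb + (-6)*pd*qc + (-4)*pd^2 + (-4)*qa*qb + (-4)*qa*qc + (-2)*qa*qd + (-2)*qa^2 + (-8)*qb*qc + (-4)*qb*qd + (-4)*qb^2 + (-6)*qc*qd + (-6)*qc^2 + (-4)*qd^2) + ((-6) + 2*pa*pb + (-2)*pa*pd + (-4)*pa*qa + (-4)*pa*qb + (-4)*pa*qc + (-2)*pa*qd + 2*pa^2 + (-4)*pb*pd + (-4)*pb*qa + (-8)*pb*qb + (-8)*pb*qc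 + (-4)*pb*qd + 2*pb^2 + (-6)*pc*pd + (-4)*pc*qa + (-8)*pc*qb + (-12)*pc*qc + (-6)*pc*qd + (-2)*pd*qa + (-4)*pd*qb + (-6)*pd*qc + (-8)*pd*qd + (-2)*qa*qb + (-4)*qa*qc + (-4)*qa*qd + (-8)*qb*qc + (-8)*qb*qd + (-2)*qb^2 + (-12)*qc*qd + (-6)*qc^2 + (-4)*qd^2) * t"
  proof -
  have tt: "t*(t*z) = t*z + z" for z using assms by (metis mult.assoc distrib_right mult_1)
  show ?thesis using assms by (simp add: algebra_simps power2_eq_square power3_eq_cube tt)
qed

lemma EOc4: fixes t pa qa pb qb pc qc pd qd :: real assumes "t*t = t+1" shows "(4 + 6*t + (-2)*t*(pa + qa*(1-t))*(pb + qb*(1-t)) + 2*t*(pa + qa*(1-t))*(pd + qd*(1-t)) + (-2)*t*(pa + qa*(1-t))^2 + 4*t*(pb + qb*(1-t))*(pd + qd*(1-t)) + (-2)*t*(pb + qb*(1-t))^2 + 6*t*(pc + qc*(1-t))*(pd + qd*(1-t)) + (-4)*(pa + qa*(1-t))*(pb + qb*(1-t)) + (-4)*(pa + qa*(1-t))*(pc + qc*(1-t)) + (-2)*(pa + qa*(1-t))*(pd + qd*(1-t)) + (-2)*(pa + qa*(1-t))^2 + (-8)*(pb + qb*(1-t))*(pc + qc*(1-t)) + (-4)*(pb + qb*(1-t))*(pd + qd*(1-t)) + (-4)*(pb + qb*(1-t))^2 + (-6)*(pc + qc*(1-t))*(pd + qd*(1-t)) + (-6)*(pc + qc*(1-t))^2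 + (-4)*(pd + qd*(1-t))^2) = (10 + (-6)*pa*pb + (-4)*pa*pc + 4*pa*qa + 2*pa*qb + (-2)*pa*qd + (-4)*pa^2 + (-8)*pb*pc + 2*pb*qa + 4*pb*qb + (-4)*pb*qd + (-6)*pb^2 + (-6)*pc*qd + (-6)*pc^2 + (-2)*pd*qa + (-4)*pd*qb + (-6)*pd*qc + (-4)*pd^2 + (-4)*qa*qb + (-4)*qa*qc + (-2)*qa*qd + (-2)*qa^2 + (-8)*qb*qc + (-4)*qb*qd + (-4)*qb^2 + (-6)*qc*qd + (-6)*qc^2 + (-4)*qd^2) + ((-6) + 2*pa*pb + (-2)*pa*pd + (-4)*pa*qa + (-4)*pa*qb + (-4)*pa*qc + (-2)*pa*qd + 2*pa^2 + (-4)*pb*pd + (-4)*pb*qa + (-8)*pb*qb + (-8)*pb*qc + (-4)*pb*qd + 2*pb^2 + (-6)*pc*pd + (-4)*pc*qa + (-8)*pc*qb + (-12)*pc*qc + (-6)*pc*qd + (-2)*pd*qa + (-4)*pd*qb + (-6)*pd*qc + (-8)*pd*qd + (-2)*qa*qb + (-4)*qa*qc + (-4)*qa*qd + (-8)*qb*qc + (-8)*qb*qd + (-2)*qb^2 + (-12)*qc*qd + (-6)*qc^2 + (-4)*qd^2) * (1-t)"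
  proof -
  have tt: "t*(t*z) = t*z + z" for z using assms by (metis mult.assoc distrib_right mult_1)
  show ?thesis using assms by (simp add: algebra_simps power2_eq_square power3_eq_cube tt)
qed

lemma QX4: fixes t xa xb xc xd :: real shows "(10 + (-6)*t) - (10 + (-6)*t + 2*t*xa*xb + (-2)*t*xa*xd + 2*t*xa^2 + (-4)*t*xb*xd + 2*t*xb^2 + (-6)*t*xc*xd + (-6)*xa*xb + (-4)*xa*xc + (-4)*xa^2 + (-8)*xb*xc + (-6)*xb^2 + (-6)*xc^2 + (-4)*xd^2) = (4 + (-2)*t) * (xa*xa) + (6 + (-2)*t) * (xa*xb) + (4 + 0*t) * (xa*xc) + (0 + 2*t) * (xa*xd) + (6 + (-2)*t) * (xb*xb) + (8 + 0*t) * (xb*xc) + (0 + 4*t) * (xb*xd) + (6 + 0*t) * (xc*xc) + (0 + 6*t) * (xc*xd) + (4 + 0*t) * (xd*xd)"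
  by (simp add: algebra_simps power2_eq_square)

lemma SOS4_0: fixes t xa xb xc xd :: real assumes "t*t = t+1" shows "50 * ((4 + 6*t) - (4 + 6*t + (-2)*t*xa*xb + 2*t*xa*xd + (-2)*t*xa^2 + 4*t*xb*xd + (-2)*t*xb^2 + 6*t*xc*xd + (-4)*xa*xb + (-4)*xa*xc + (-2)*xa*xd + (-2)*xa^2 + (-8)*xb*xc + (-4)*xb*xd + (-4)*xb^2 + (-6)*xc*xd + (-6)*xc^2 + (-4)*xd^2)) = (2 + 1*t) * ((10 + 0*t)*xb + (12 + (-4)*t)*xc + (8 + (-6)*t)*xd + (5 + 0*t)*xa)^2 + (15 + 20*t) * ((2 + 0*t)*xc + (1 + (-1)*t)*xd + (0 + 0*t)*xa)^2 + (50 + 75*t) * ((1 + 0*t)*xd + (0 + 0*t)*xa)^2 + (50 + 75*t) * xa^2"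
  proof -
  have tt: "t*(t*z) = t*z + z" for z using assms by (metis mult.assoc distrib_right mult_1)
  show ?thesis using assms by (simp add: algebra_simps power2_eq_square power3_eq_cube tt)
qed

lemma SOS4_1: fixes t xa xb xc xd :: real assumes "t*t = t+1" shows "2 * ((4 + 6*t) - (4 + 6*t + (-2)*t*xa*xb + 2*t*xa*xd + (-2)*t*xa^2 + 4*t*xb*xd + (-2)*t*xb^2 + 6*t*xc*xd + (-4)*xa*xb + (-4)*xa*xc + (-2)*xa*xd + (-2)*xa^2 + (-8)*xb*xc + (-4)*xb*xd + (-4)*xb^2 + (-6)*xc*xd + (-6)*xc^2 + (-4)*xd^2)) = (1 + 1*t) * ((2 + 0*t)*xa + (4 + (-2)*t)*xc + (3 + (-2)*t)*xd + (3 + (-1)*t)*xb)^2 + (1 + 1*t) * ((2 + 0*t)*xc + (1 + (-1)*t)*xd + (1 + 0*t)*xb)^2 + (2 + 3*t) * ((1 + 0*t)*xd + (0 + 0*t)*xb)^2 + (2 + 3*t) * xb^2"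
  proof -
  have tt: "t*(t*z) = t*z + z" for z using assms by (metis mult.assoc distrib_right mult_1)
  show ?thesis using assms by (simp add: algebra_simps power2_eq_square power3_eq_cube tt)
qed

lemma SOS4_2: fixes t xa xb xc xd :: real assumes "t*t = t+1" shows "50 * ((4 + 6*t) - (4 + 6*t + (-2)*t*xa*xb + 2*t*xa*xd + (-2)*t*xa^2 + 4*t*xb*xd + (-2)*t*xb^2 + 6*t*xc*xd + (-4)*xa*xb + (-4)*xa*xc + (-2)*xa*xd + (-2)*xa^2 + (-8)*xb*xc + (-4)*xb*xd + (-4)*xb^2 + (-6)*xc*xd + (-6)*xc^2 + (-4)*xd^2)) = (25 + 25*t) * ((2 + 0*t)*xa + (3 + (-1)*t)*xb + (3 + (-2)*t)*xd + (4 + (-2)*t)*xc)^2 + (3 + 4*t) * ((5 + 0*t)*xb + (4 + (-3)*t)*xd + (6 + (-2)*t)*xc)^2 + (15 + 20*t) * ((2 + 0*t)*xd + (1 + (-1)*t)*xc)^2 + (50 + 75*t) * xc^2"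
  proof -
  have tt: "t*(t*z) = t*z + z" for z using assms by (metis mult.assoc distrib_right mult_1)
  show ?thesis using assms by (simp add: algebra_simps power2_eq_square power3_eq_cube tt)
qed

lemma SOS4_3: fixes t xa xb xc xd :: real assumes "t*t = t+1" shows "50 * ((4 + 6*t) - (4 + 6*t + (-2)*t*xa*xb + 2*t*xa*xd + (-2)*t*xa^2 + 4*t*xb*xd + (-2)*t*xb^2 + 6*t*xc*xd + (-4)*xa*xb + (-4)*xa*xc + (-2)*xa*xd + (-2)*xa^2 + (-8)*xb*xc + (-4)*xb*xd + (-4)*xb^2 + (-6)*xc*xd + (-6)*xc^2 + (-4)*xd^2)) = (25 + 25*t) * ((2 + 0*t)*xa + (3 + (-1)*t)*xb + (4 + (-2)*t)*xc + (3 + (-2)*t)*xd)^2 + (3 + 4*t) * ((5 + 0*t)*xb + (6 + (-2)*t)*xc + (4 + (-3)*t)*xd)^2 + (15 + 20*t) * ((2 + 0*t)*xc + (1 + (-1)*t)*xd)^2 + (50 + 75*t) * xd^2"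
  proof -
  have tt: "t*(t*z) = t*z + z" for z using assms by (metis mult.assoc distrib_right mult_1)
  show ?thesis using assms by (simp add: algebra_simps power2_eq_square power3_eq_cube tt)
qed

lemma det2: "det (bordered A2 a) = (5 + (-1)*sqrt 5 + (-1)*sqrt 5*a$0*a$1 + (-1)*a$0*a$1 + (-2)*a$0^2 + (-2)*a$1^2)" (is "?L = ?R")
proof -
  have "det (bordered A2 a) = detf 3 (\<lambda>i j. if i = 0 \<and> j = 0 then 2
               else if i = 0 then a $ (j - 1)
               else if j = 0 then a $ (i - 1)
               else A2 $$ (i - 1, j - 1))"
    unfolding bordered_def dims by (subst det_detf[symmetric]) simp
  also have "\<dots> = ?R" unfolding detf_num A2_def tau_def
    apply (simp add: numeral_eq_Suc)
    by (simp add: algebra_simps power2_eq_square divide_simps) algebra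
  finally show ?thesis .
qed
lemma det3: "det (bordered A3 a) = (6 + (-2)*sqrt 5 + (-1)*sqrt 5*a$0*a$2 + (1/2)*sqrt 5*a$0^2 + (-2)*sqrt 5*a$1*a$2 + (-4)*a$0*a$1 + (-1)*a$0*a$2 + (-5/2)*a$0^2 + (-2)*a$1*a$2 + (-4)*a$1^2 + (-3)*a$2^2)" (is "?L = ?R")
proof -
  have "det (bordered A3 a) = detf 4 (\<lambda>i j. if i = 0 \<and> j = 0 then 2
               else if i = 0 then a $ (j - 1)
               else if j = 0 then a $ (i - 1)
               else A3 $$ (i - 1, j - 1))"
    unfolding bordered_def dims by (subst det_detf[symmetric]) simp
  also have "\<dots> = ?R" unfolding detf_num A3_def tau_def
    apply (simp add: numeral_eq_Suc)
    by (simp add: algebra_simps power2_eq_square divide_simps) algebra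
  finally show ?thesis .
qed
lemma det4: "det (bordered A4 a) = (7 + (-3)*sqrt 5 + sqrt 5*a$0*a$1 + (-1)*sqrt 5*a$0*a$3 + sqrt 5*a$0^2 + (-2)*sqrt 5*a$1*a$3 + sqrt 5*a$1^2 + (-3)*sqrt 5*a$2*a$3 + (-5)*a$0*a$1 + (-4)*a$0*a$2 + (-1)*a$0*a$3 + (-3)*a$0^2 + (-8)*a$1*a$2 + (-2)*a$1*a$3 + (-5)*a$1^2 + (-3)*a$2*a$3 + (-6)*a$2^2 + (-4)*a$3^2)" (is "?L = ?R")
proof -
  have "det (bordered A4 a) = detf 5 (\<lambda>i j. if i = 0 \<and> j = 0 then 2
               else if i = 0 then a $ (j - 1)
               else if j = 0 then a $ (i - 1)
               else A4 $$ (i - 1, j - 1))"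
    unfolding bordered_def dims by (subst det_detf[symmetric]) simp
  also have "\<dots> = ?R" unfolding detf_num A4_def tau_def
    apply (simp add: numeral_eq_Suc)
    by (simp add: algebra_simps power2_eq_square divide_simps) algebra
  finally show ?thesis .
qed

lemma det2t: "det (bordered A2 a) = (6 + (-2)*tau + (-2)*tau*a$0*a$1 + (-2)*a$0^2 + (-2)*a$1^2)"
  unfolding det2 tau_def by (simp add: algebra_simps divide_simps power2_eq_square)

lemma det3t: "det (bordered A3 a) = (8 + (-4)*tau + (-2)*tau*a$0*a$2 + tau*a$0^2 + (-4)*tau*a$1*a$2 + (-4)*a$0*a$1 + (-3)*a$0^2 + (-4)*a$1^2 + (-3)*a$2^2)"
  unfolding det3 tau_def by (simp add: algebra_simps divide_simps power2_eq_square)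

lemma det4t: "det (bordered A4 a) = (10 + (-6)*tau + 2*tau*a$0*a$1 + (-2)*tau*a$0*a$3 + 2*tau*a$0^2 + (-4)*tau*a$1*a$3 + 2*tau*a$1^2 + (-6)*tau*a$2*a$3 + (-6)*a$0*a$1 + (-4)*a$0*a$2 + (-4)*a$0^2 + (-8)*a$1*a$2 + (-6)*a$1^2 + (-6)*a$2^2 + (-4)*a$3^2)"
  unfolding det4 tau_def by (simp add: algebra_simps divide_simps power2_eq_square)


lemma part2: "affine_solutions A2 2 = {vec_of_list [tau', tau']}"
proof (intro equalityI subsetI)
  fix a assume "a \<in> affine_solutions A2 2"
  then have acar: "a \<in> carrier_vec 2" and neg: "\<forall>i<2. a$i \<in> Ztau_neg" and d: "det (bordered A2 a) = 0"
    unfolding affine_solutions_def by auto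
  have "a$0 \<in> Ztau_neg" using neg by simp
  then obtain p0 q0 :: int where x0: "a$0 = of_int p0 + of_int q0 * tau" and n0: "a$0 \<le> 0"
    unfolding Ztau_neg_def Ztau_def by auto
  have "a$1 \<in> Ztau_neg" using neg by simp
  then obtain p1 q1 :: int where x1: "a$1 = of_int p1 + of_int q1 * tau" and n1: "a$1 \<le> 0"
    unfolding Ztau_neg_def Ztau_def by auto
  have Fx: "(6 + (-2)*tau + (-2)*tau*a$0*a$1 + (-2)*a$0^2 + (-2)*a$1^2) = 0" using d det2t by simp
  have Fp: "(6 + (-2)*real_of_int p0*real_of_int q1 + (-2)*real_of_int p0^2 + (-2)*real_of_int p1*real_of_int q0 + (-2)*real_of_int p1^2 + (-2)*real_of_int q0*real_of_int q1 + (-2)*real_of_int q0^2 + (-2)*real_of_int q1^2) + ((-2) + (-2)*real_of_int p0*real_of_int p1 + (-4)*real_of_int p0*real_of_int q0 + (-2)*real_of_int p0*real_of_int q1 + (-2)*real_of_int p1*real_of_int q0 + (-4)*real_of_int p1*real_of_int q1 + (-4)*real_of_int q0*real_of_int q1 + (-2)*real_of_int q0^2 + (-2)*real_of_int q1^2) * tau = 0"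
    using Fx[unfolded x0 x1, unfolded EO2[OF tsq, where pa="real_of_int p0" and qa="real_of_int q0" and pb="real_of_int p1" and qb="real_of_int q1"]] .
  have EE: "real_of_int (6 + (-2)*p0*q1 + (-2)*p0^2 + (-2)*p1*q0 + (-2)*p1^2 + (-2)*q0*q1 + (-2)*q0^2 + (-2)*q1^2) = (6 + (-2)*real_of_int p0*real_of_int q1 + (-2)*real_of_int p0^2 + (-2)*real_of_int p1*real_of_int q0 + (-2)*real_of_int p1^2 + (-2)*real_of_int q0*real_of_int q1 + (-2)*real_of_int q0^2 + (-2)*real_of_int q1^2)" by simp
  have OO: "real_of_int ((-2) + (-2)*p0*p1 + (-4)*p0*q0 + (-2)*p0*q1 + (-2)*p1*q0 + (-4)*p1*q1 + (-4)*q0*q1 + (-2)*q0^2 + (-2)*q1^2) = ((-2) + (-2)*real_of_int p0*real_of_int p1 + (-4)*real_of_int p0*real_of_int q0 + (-2)*real_of_int p0*real_of_int q1 + (-2)*real_of_int p1*real_of_int q0 + (-4)*real_of_int p1*real_of_int q1 + (-4)*real_of_int q0*real_of_int q1 + (-2)*real_of_int q0^2 + (-2)*real_of_int q1^2)" by simp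
  have EOi: "(6 + (-2)*p0*q1 + (-2)*p0^2 + (-2)*p1*q0 + (-2)*p1^2 + (-2)*q0*q1 + (-2)*q0^2 + (-2)*q1^2) = 0 \<and> ((-2) + (-2)*p0*p1 + (-4)*p0*q0 + (-2)*p0*q1 + (-2)*p1*q0 + (-4)*p1*q1 + (-4)*q0*q1 + (-2)*q0^2 + (-2)*q1^2) = 0"
    by (rule tau_irr[OF tsq]) (unfold EE OO, rule Fp)
  have E0: "(6 + (-2)*real_of_int p0*real_of_int q1 + (-2)*real_of_int p0^2 + (-2)*real_of_int p1*real_of_int q0 + (-2)*real_of_int p1^2 + (-2)*real_of_int q0*real_of_int q1 + (-2)*real_of_int q0^2 + (-2)*real_of_int q1^2) = 0" using EOi EE by simp
  have O0: "((-2) + (-2)*real_of_int p0*real_of_int p1 + (-4)*real_of_int p0*real_of_int q0 + (-2)*real_of_int p0*real_of_int q1 + (-2)*real_of_int p1*real_of_int q0 + (-4)*real_of_int p1*real_of_int q1 + (-4)*real_of_int q0*real_of_int q1 + (-2)*real_of_int q0^2 + (-2)*real_of_int q1^2) = 0" using EOi OO by simp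
  have Fb: "(4 + 2*tau + 2*tau*(real_of_int p0 + real_of_int q0*(1-tau))*(real_of_int p1 + real_of_int q1*(1-tau)) + (-2)*(real_of_int p0 + real_of_int q0*(1-tau))*(real_of_int p1 + real_of_int q1*(1-tau)) + (-2)*(real_of_int p0 + real_of_int q0*(1-tau))^2 + (-2)*(real_of_int p1 + real_of_int q1*(1-tau))^2) = 0"
    using EOc2[OF tsq, where pa="real_of_int p0" and qa="real_of_int q0" and pb="real_of_int p1" and qb="real_of_int q1"] unfolding E0 O0 by simp
  have QX: "(6 + (-2)*tau) - 0 = (2 + 0*tau) * (a$0*a$0) + (0 + 2*tau) * (a$0*a$1) + (2 + 0*tau) * (a$1*a$1)"
    using QX2[where t=tau and xa="a$0" and xb="a$1"] unfolding Fx .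
  have T0: "0 \<le> (2 + 0*tau) * (a$0*a$0)"
    by (intro mult_nonneg_nonneg mult_nonpos_nonpos) (use t1 t2 n0 n0 in linarith)+
  have T1: "0 \<le> (0 + 2*tau) * (a$0*a$1)"
    by (intro mult_nonneg_nonneg mult_nonpos_nonpos) (use t1 t2 n0 n1 in linarith)+
  have T2: "0 \<le> (2 + 0*tau) * (a$1*a$1)"
    by (intro mult_nonneg_nonneg mult_nonpos_nonpos) (use t1 t2 n1 n1 in linarith)+
  have bx0: "a$0*a$0 \<le> (3/2)"
  proof (rule bnd[of "(2 + 0*tau)" _ "(6 + (-2)*tau)"])
    show "(2 + 0*tau) * (a$0*a$0) \<le> (6 + (-2)*tau)" using QX T0 T1 T2 by linarith
  qed (use t1 t2 in \<open>(simp add: algebra_simps)?; linarith\<close>)+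
  have bx1: "a$1*a$1 \<le> (3/2)"
  proof (rule bnd[of "(2 + 0*tau)" _ "(6 + (-2)*tau)"])
    show "(2 + 0*tau) * (a$1*a$1) \<le> (6 + (-2)*tau)" using QX T0 T1 T2 by linarith
  qed (use t1 t2 in \<open>(simp add: algebra_simps)?; linarith\<close>)+
  have by0: "(real_of_int p0 + real_of_int q0*(1-tau)) * (real_of_int p0 + real_of_int q0*(1-tau)) \<le> 4"
  proof -
    note S = SOS2_0[OF tsq, where xa="real_of_int p0 + real_of_int q0*(1-tau)" and xb="real_of_int p1 + real_of_int q1*(1-tau)", unfolded Fb]
    show ?thesis by (rule sosb1[OF S]) (use t1 t2 in \<open>(simp add: algebra_simps)?; linarith\<close>)+
  qed
  have by1: "(real_of_int p1 + real_of_int q1*(1-tau)) * (real_of_int p1 + real_of_int q1*(1-tau)) \<le> 4"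
  proof -
    note S = SOS2_1[OF tsq, where xa="real_of_int p0 + real_of_int q0*(1-tau)" and xb="real_of_int p1 + real_of_int q1*(1-tau)", unfolded Fb]
    show ?thesis by (rule sosb1[OF S]) (use t1 t2 in \<open>(simp add: algebra_simps)?; linarith\<close>)+
  qed
  have C0: "(p0 = 0 \<and> q0 = 0) \<or> (p0 = -1 \<and> q0 = 0) \<or> (p0 = 1 \<and> q0 = -1)"
    by (rule cand3[OF t1 t2]) (use n0 bx0 by0 x0 in auto)
  have C1: "(p1 = 0 \<and> q1 = 0) \<or> (p1 = -1 \<and> q1 = 0) \<or> (p1 = 1 \<and> q1 = -1)"
    by (rule cand3[OF t1 t2]) (use n1 bx1 by1 x1 in auto)
  have R: "p0 = 1 \<and> q0 = -1 \<and> p1 = 1 \<and> q1 = -1" using C0 C1 EOi by auto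
  have "a = vec_of_list [tau', tau']"
  proof (rule eq_vecI)
    show "dim_vec a = dim_vec (vec_of_list [tau', tau'])" using acar by simp
  next
    fix i assume "i < dim_vec (vec_of_list [tau', tau'])"
    then have "i < 2" by simp
    then have "i = 0 \<or> i = 1" by linarith
    then show "a $ i = vec_of_list [tau', tau'] $ i"
      using R x0 x1 by (auto simp del: vec_of_list_Cons simp: vec_of_list_index taup)
  qed
  then show "a \<in> {vec_of_list [tau', tau']}" by simp
next
  fix a assume "a \<in> {vec_of_list [tau', tau']}"
  then have a: "a = vec_of_list [tau', tau']" by simp
  have "det (bordered A2 a) = 0"
    unfolding det2t unfolding a by (simp del: vec_of_list_Cons add: vec_of_list_index taup) (simp add: algebra_simps power2_eq_square power3_eq_cube ttau tsq)
  moreover have "\<forall>i<2. a$i \<in> Ztau_neg"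
  proof (intro allI impI)
    fix i :: nat assume "i < 2"
    then have "i = 0 \<or> i = 1" by linarith
    then show "a$i \<in> Ztau_neg" unfolding a using Ztau_neg_0 Ztau_neg_tau' by (auto simp del: vec_of_list_Cons simp: vec_of_list_index)
  qed
  moreover have "a \<in> carrier_vec 2" unfolding a carrier_vec_def by (simp del: vec_of_list_Cons)
  ultimately show "a \<in> affine_solutions A2 2" unfolding affine_solutions_def by blast
qed

lemma part3: "affine_solutions A3 3 = {vec_of_list [0, tau', 0]}"
proof (intro equalityI subsetI)
  fix a assume "a \<in> affine_solutions A3 3"
  then have acar: "a \<in> carrier_vec 3" and neg: "\<forall>i<3. a$i \<in> Ztau_neg" and d: "det (bordered A3 a) = 0"
    unfolding affine_solutions_def by auto
  have "a$0 \<in> Ztau_neg" using neg by simp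
  then obtain p0 q0 :: int where x0: "a$0 = of_int p0 + of_int q0 * tau" and n0: "a$0 \<le> 0"
    unfolding Ztau_neg_def Ztau_def by auto
  have "a$1 \<in> Ztau_neg" using neg by simp
  then obtain p1 q1 :: int where x1: "a$1 = of_int p1 + of_int q1 * tau" and n1: "a$1 \<le> 0"
    unfolding Ztau_neg_def Ztau_def by auto
  have "a$2 \<in> Ztau_neg" using neg by simp
  then obtain p2 q2 :: int where x2: "a$2 = of_int p2 + of_int q2 * tau" and n2: "a$2 \<le> 0"
    unfolding Ztau_neg_def Ztau_def by auto
  have Fx: "(8 + (-4)*tau + (-2)*tau*a$0*a$2 + tau*a$0^2 + (-4)*tau*a$1*a$2 + (-4)*a$0*a$1 + (-3)*a$0^2 + (-4)*a$1^2 + (-3)*a$2^2) = 0" using d det3t by simp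
  have Fp: "(8 + (-4)*real_of_int p0*real_of_int p1 + 2*real_of_int p0*real_of_int q0 + (-2)*real_of_int p0*real_of_int q2 + (-3)*real_of_int p0^2 + (-4)*real_of_int p1*real_of_int q2 + (-4)*real_of_int p1^2 + (-2)*real_of_int p2*real_of_int q0 + (-4)*real_of_int p2*real_of_int q1 + (-3)*real_of_int p2^2 + (-4)*real_of_int q0*real_of_int q1 + (-2)*real_of_int q0*real_of_int q2 + (-2)*real_of_int q0^2 + (-4)*real_of_int q1*real_of_int q2 + (-4)*real_of_int q1^2 + (-3)*real_of_int q2^2) + ((-4) + (-2)*real_of_int p0*real_of_int p2 + (-4)*real_of_int p0*real_of_int q0 + (-4)*real_of_int p0*real_of_int q1 + (-2)*real_of_int p0*real_of_int q2 + real_of_int p0^2 + (-4)*real_of_int p1*real_of_int p2 + (-4)*real_of_int p1*real_of_int q0 + (-8)*real_of_int p1*real_of_int q1 + (-4)*real_of_int p1*real_of_int q2 + (-2)*real_of_int p2*real_of_int q0 + (-4)*real_of_int p2*real_of_int q1 + (-6)*real_of_int p2*real_of_int q2 + (-4)*real_of_int q0*real_of_int q1 + (-4)*real_of_int q0*real_of_int q2 + (-1)*real_of_int q0^2 + (-8)*real_of_int q1*real_of_int q2 + (-4)*real_of_int q1^2 + (-3)*real_of_int q2^2) * tau = 0"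
    using Fx[unfolded x0 x1 x2, unfolded EO3[OF tsq, where pa="real_of_int p0" and qa="real_of_int q0" and pb="real_of_int p1" and qb="real_of_int q1" and pc="real_of_int p2" and qc="real_of_int q2"]] .
  have EE: "real_of_int (8 + (-4)*p0*p1 + 2*p0*q0 + (-2)*p0*q2 + (-3)*p0^2 + (-4)*p1*q2 + (-4)*p1^2 + (-2)*p2*q0 + (-4)*p2*q1 + (-3)*p2^2 + (-4)*q0*q1 + (-2)*q0*q2 + (-2)*q0^2 + (-4)*q1*q2 + (-4)*q1^2 + (-3)*q2^2) = (8 + (-4)*real_of_int p0*real_of_int p1 + 2*real_of_int p0*real_of_int q0 + (-2)*real_of_int p0*real_of_int q2 + (-3)*real_of_int p0^2 + (-4)*real_of_int p1*real_of_int q2 + (-4)*real_of_int p1^2 + (-2)*real_of_int p2*real_of_int q0 + (-4)*real_of_int p2*real_of_int q1 + (-3)*real_of_int p2^2 + (-4)*real_of_int q0*real_of_int q1 + (-2)*real_of_int q0*real_of_int q2 + (-2)*real_of_int q0^2 + (-4)*real_of_int q1*real_of_int q2 + (-4)*real_of_int q1^2 + (-3)*real_of_int q2^2)" by simp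
  have OO: "real_of_int ((-4) + (-2)*p0*p2 + (-4)*p0*q0 + (-4)*p0*q1 + (-2)*p0*q2 + p0^2 + (-4)*p1*p2 + (-4)*p1*q0 + (-8)*p1*q1 + (-4)*p1*q2 + (-2)*p2*q0 + (-4)*p2*q1 + (-6)*p2*q2 + (-4)*q0*q1 + (-4)*q0*q2 + (-1)*q0^2 + (-8)*q1*q2 + (-4)*q1^2 + (-3)*q2^2) = ((-4) + (-2)*real_of_int p0*real_of_int p2 + (-4)*real_of_int p0*real_of_int q0 + (-4)*real_of_int p0*real_of_int q1 + (-2)*real_of_int p0*real_of_int q2 + real_of_int p0^2 + (-4)*real_of_int p1*real_of_int p2 + (-4)*real_of_int p1*real_of_int q0 + (-8)*real_of_int p1*real_of_int q1 + (-4)*real_of_int p1*real_of_int q2 + (-2)*real_of_int p2*real_of_int q0 + (-4)*real_of_int p2*real_of_int q1 + (-6)*real_of_int p2*real_of_int q2 + (-4)*real_of_int q0*real_of_int q1 + (-4)*real_of_int q0*real_of_int q2 + (-1)*real_of_int q0^2 + (-8)*real_of_int q1*real_of_int q2 + (-4)*real_of_int q1^2 + (-3)*real_of_int q2^2)" by simp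
  have EOi: "(8 + (-4)*p0*p1 + 2*p0*q0 + (-2)*p0*q2 + (-3)*p0^2 + (-4)*p1*q2 + (-4)*p1^2 + (-2)*p2*q0 + (-4)*p2*q1 + (-3)*p2^2 + (-4)*q0*q1 + (-2)*q0*q2 + (-2)*q0^2 + (-4)*q1*q2 + (-4)*q1^2 + (-3)*q2^2) = 0 \<and> ((-4) + (-2)*p0*p2 + (-4)*p0*q0 + (-4)*p0*q1 + (-2)*p0*q2 + p0^2 + (-4)*p1*p2 + (-4)*p1*q0 + (-8)*p1*q1 + (-4)*p1*q2 + (-2)*p2*q0 + (-4)*p2*q1 + (-6)*p2*q2 + (-4)*q0*q1 + (-4)*q0*q2 + (-1)*q0^2 + (-8)*q1*q2 + (-4)*q1^2 + (-3)*q2^2) = 0"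
    by (rule tau_irr[OF tsq]) (unfold EE OO, rule Fp)
  have E0: "(8 + (-4)*real_of_int p0*real_of_int p1 + 2*real_of_int p0*real_of_int q0 + (-2)*real_of_int p0*real_of_int q2 + (-3)*real_of_int p0^2 + (-4)*real_of_int p1*real_of_int q2 + (-4)*real_of_int p1^2 + (-2)*real_of_int p2*real_of_int q0 + (-4)*real_of_int p2*real_of_int q1 + (-3)*real_of_int p2^2 + (-4)*real_of_int q0*real_of_int q1 + (-2)*real_of_int q0*real_of_int q2 + (-2)*real_of_int q0^2 + (-4)*real_of_int q1*real_of_int q2 + (-4)*real_of_int q1^2 + (-3)*real_of_int q2^2) = 0" using EOi EE by simp
  have O0: "((-4) + (-2)*real_of_int p0*real_of_int p2 + (-4)*real_of_int p0*real_of_int q0 + (-4)*real_of_int p0*real_of_int q1 + (-2)*real_of_int p0*real_of_int q2 + real_of_int p0^2 + (-4)*real_of_int p1*real_of_int p2 + (-4)*real_of_int p1*real_of_int q0 + (-8)*real_of_int p1*real_of_int q1 + (-4)*real_of_int p1*real_of_int q2 + (-2)*real_of_int p2*real_of_int q0 + (-4)*real_of_int p2*real_of_int q1 + (-6)*real_of_int p2*real_of_int q2 + (-4)*real_of_int q0*real_of_int q1 + (-4)*real_of_int q0*real_of_int q2 + (-1)*real_of_int q0^2 + (-8)*real_of_int q1*real_of_int q2 + (-4)*real_of_int q1^2 + (-3)*real_of_int q2^2) = 0" using EOi OO by simp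
  have Fb: "(4 + 4*tau + 2*tau*(real_of_int p0 + real_of_int q0*(1-tau))*(real_of_int p2 + real_of_int q2*(1-tau)) + (-1)*tau*(real_of_int p0 + real_of_int q0*(1-tau))^2 + 4*tau*(real_of_int p1 + real_of_int q1*(1-tau))*(real_of_int p2 + real_of_int q2*(1-tau)) + (-4)*(real_of_int p0 + real_of_int q0*(1-tau))*(real_of_int p1 + real_of_int q1*(1-tau)) + (-2)*(real_of_int p0 + real_of_int q0*(1-tau))*(real_of_int p2 + real_of_int q2*(1-tau)) + (-2)*(real_of_int p0 + real_of_int q0*(1-tau))^2 + (-4)*(real_of_int p1 + real_of_int q1*(1-tau))*(real_of_int p2 + real_of_int q2*(1-tau)) + (-4)*(real_of_int p1 + real_of_int q1*(1-tau))^2 + (-3)*(real_of_int p2 + real_of_int q2*(1-tau))^2) = 0"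
    using EOc3[OF tsq, where pa="real_of_int p0" and qa="real_of_int q0" and pb="real_of_int p1" and qb="real_of_int q1" and pc="real_of_int p2" and qc="real_of_int q2"] unfolding E0 O0 by simp
  have QX: "(8 + (-4)*tau) - 0 = (3 + (-1)*tau) * (a$0*a$0) + (4 + 0*tau) * (a$0*a$1) + (0 + 2*tau) * (a$0*a$2) + (4 + 0*tau) * (a$1*a$1) + (0 + 4*tau) * (a$1*a$2) + (3 + 0*tau) * (a$2*a$2)"
    using QX3[where t=tau and xa="a$0" and xb="a$1" and xc="a$2"] unfolding Fx .
  have T0: "0 \<le> (3 + (-1)*tau) * (a$0*a$0)"
    by (intro mult_nonneg_nonneg mult_nonpos_nonpos) (use t1 t2 n0 n0 in linarith)+
  have T1: "0 \<le> (4 + 0*tau) * (a$0*a$1)"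
    by (intro mult_nonneg_nonneg mult_nonpos_nonpos) (use t1 t2 n0 n1 in linarith)+
  have T2: "0 \<le> (0 + 2*tau) * (a$0*a$2)"
    by (intro mult_nonneg_nonneg mult_nonpos_nonpos) (use t1 t2 n0 n2 in linarith)+
  have T3: "0 \<le> (4 + 0*tau) * (a$1*a$1)"
    by (intro mult_nonneg_nonneg mult_nonpos_nonpos) (use t1 t2 n1 n1 in linarith)+
  have T4: "0 \<le> (0 + 4*tau) * (a$1*a$2)"
    by (intro mult_nonneg_nonneg mult_nonpos_nonpos) (use t1 t2 n1 n2 in linarith)+
  have T5: "0 \<le> (3 + 0*tau) * (a$2*a$2)"
    by (intro mult_nonneg_nonneg mult_nonpos_nonpos) (use t1 t2 n2 n2 in linarith)+
  have bx0: "a$0*a$0 \<le> (3/2)"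
  proof (rule bnd[of "(3 + (-1)*tau)" _ "(8 + (-4)*tau)"])
    show "(3 + (-1)*tau) * (a$0*a$0) \<le> (8 + (-4)*tau)" using QX T0 T1 T2 T3 T4 T5 by linarith
  qed (use t1 t2 in \<open>(simp add: algebra_simps)?; linarith\<close>)+
  have bx1: "a$1*a$1 \<le> (9/10)"
  proof (rule bnd[of "(4 + 0*tau)" _ "(8 + (-4)*tau)"])
    show "(4 + 0*tau) * (a$1*a$1) \<le> (8 + (-4)*tau)" using QX T0 T1 T2 T3 T4 T5 by linarith
  qed (use t1 t2 in \<open>(simp add: algebra_simps)?; linarith\<close>)+
  have bx2: "a$2*a$2 \<le> (9/10)"
  proof (rule bnd[of "(3 + 0*tau)" _ "(8 + (-4)*tau)"])
    show "(3 + 0*tau) * (a$2*a$2) \<le> (8 + (-4)*tau)" using QX T0 T1 T2 T3 T4 T5 by linarith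
  qed (use t1 t2 in \<open>(simp add: algebra_simps)?; linarith\<close>)+
  have by0: "(real_of_int p0 + real_of_int q0*(1-tau)) * (real_of_int p0 + real_of_int q0*(1-tau)) \<le> 4"
  proof -
    note S = SOS3_0[OF tsq, where xa="real_of_int p0 + real_of_int q0*(1-tau)" and xb="real_of_int p1 + real_of_int q1*(1-tau)" and xc="real_of_int p2 + real_of_int q2*(1-tau)", unfolded Fb]
    show ?thesis by (rule sosb2[OF S]) (use t1 t2 in \<open>(simp add: algebra_simps)?; linarith\<close>)+
  qed
  have by1: "(real_of_int p1 + real_of_int q1*(1-tau)) * (real_of_int p1 + real_of_int q1*(1-tau)) \<le> 4"
  proof -
    note S = SOS3_1[OF tsq, where xa="real_of_int p0 + real_of_int q0*(1-tau)" and xb="real_of_int p1 + real_of_int q1*(1-tau)" and xc="real_of_int p2 + real_of_int q2*(1-tau)", unfolded Fb]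
    show ?thesis by (rule sosb2[OF S]) (use t1 t2 in \<open>(simp add: algebra_simps)?; linarith\<close>)+
  qed
  have by2: "(real_of_int p2 + real_of_int q2*(1-tau)) * (real_of_int p2 + real_of_int q2*(1-tau)) \<le> 4"
  proof -
    note S = SOS3_2[OF tsq, where xa="real_of_int p0 + real_of_int q0*(1-tau)" and xb="real_of_int p1 + real_of_int q1*(1-tau)" and xc="real_of_int p2 + real_of_int q2*(1-tau)", unfolded Fb]
    show ?thesis by (rule sosb2[OF S]) (use t1 t2 in \<open>(simp add: algebra_simps)?; linarith\<close>)+
  qed
  have C0: "(p0 = 0 \<and> q0 = 0) \<or> (p0 = -1 \<and> q0 = 0) \<or> (p0 = 1 \<and> q0 = -1)"
    by (rule cand3[OF t1 t2]) (use n0 bx0 by0 x0 in auto)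
  have C1: "(p1 = 0 \<and> q1 = 0) \<or> (p1 = 1 \<and> q1 = -1)"
    by (rule cand2[OF t1 t2]) (use n1 bx1 by1 x1 in auto)
  have C2: "(p2 = 0 \<and> q2 = 0) \<or> (p2 = 1 \<and> q2 = -1)"
    by (rule cand2[OF t1 t2]) (use n2 bx2 by2 x2 in auto)
  have R: "p0 = 0 \<and> q0 = 0 \<and> p1 = 1 \<and> q1 = -1 \<and> p2 = 0 \<and> q2 = 0" using C0 C1 C2 EOi by auto
  have "a = vec_of_list [0, tau', 0]"
  proof (rule eq_vecI)
    show "dim_vec a = dim_vec (vec_of_list [0, tau', 0])" using acar by simp
  next
    fix i assume "i < dim_vec (vec_of_list [0, tau', 0])"
    then have "i < 3" by simp
    then have "i = 0 \<or> i = 1 \<or> i = 2" by linarith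
    then show "a $ i = vec_of_list [0, tau', 0] $ i"
      using R x0 x1 x2 by (auto simp del: vec_of_list_Cons simp: vec_of_list_index taup)
  qed
  then show "a \<in> {vec_of_list [0, tau', 0]}" by simp
next
  fix a assume "a \<in> {vec_of_list [0, tau', 0]}"
  then have a: "a = vec_of_list [0, tau', 0]" by simp
  have "det (bordered A3 a) = 0"
    unfolding det3t unfolding a by (simp del: vec_of_list_Cons add: vec_of_list_index taup) (simp add: algebra_simps power2_eq_square power3_eq_cube ttau tsq)
  moreover have "\<forall>i<3. a$i \<in> Ztau_neg"
  proof (intro allI impI)
    fix i :: nat assume "i < 3"
    then have "i = 0 \<or> i = 1 \<or> i = 2" by linarith
    then show "a$i \<in> Ztau_neg" unfolding a using Ztau_neg_0 Ztau_neg_tau' by (auto simp del: vec_of_list_Cons simp: vec_of_list_index)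
  qed
  moreover have "a \<in> carrier_vec 3" unfolding a carrier_vec_def by (simp del: vec_of_list_Cons)
  ultimately show "a \<in> affine_solutions A3 3" unfolding affine_solutions_def by blast
qed

lemma part4: "affine_solutions A4 4 = {vec_of_list [tau', 0, 0, 0]}"
proof (intro equalityI subsetI)
  fix a assume "a \<in> affine_solutions A4 4"
  then have acar: "a \<in> carrier_vec 4" and neg: "\<forall>i<4. a$i \<in> Ztau_neg" and d: "det (bordered A4 a) = 0"
    unfolding affine_solutions_def by auto
  have "a$0 \<in> Ztau_neg" using neg by simp
  then obtain p0 q0 :: int where x0: "a$0 = of_int p0 + of_int q0 * tau" and n0: "a$0 \<le> 0"
    unfolding Ztau_neg_def Ztau_def by auto
  have "a$1 \<in> Ztau_neg" using neg by simp
  then obtain p1 q1 :: int where x1: "a$1 = of_int p1 + of_int q1 * tau" and n1: "a$1 \<le> 0"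
    unfolding Ztau_neg_def Ztau_def by auto
  have "a$2 \<in> Ztau_neg" using neg by simp
  then obtain p2 q2 :: int where x2: "a$2 = of_int p2 + of_int q2 * tau" and n2: "a$2 \<le> 0"
    unfolding Ztau_neg_def Ztau_def by auto
  have "a$3 \<in> Ztau_neg" using neg by simp
  then obtain p3 q3 :: int where x3: "a$3 = of_int p3 + of_int q3 * tau" and n3: "a$3 \<le> 0"
    unfolding Ztau_neg_def Ztau_def by auto
  have Fx: "(10 + (-6)*tau + 2*tau*a$0*a$1 + (-2)*tau*a$0*a$3 + 2*tau*a$0^2 + (-4)*tau*a$1*a$3 + 2*tau*a$1^2 + (-6)*tau*a$2*a$3 + (-6)*a$0*a$1 + (-4)*a$0*a$2 + (-4)*a$0^2 + (-8)*a$1*a$2 + (-6)*a$1^2 + (-6)*a$2^2 + (-4)*a$3^2) = 0" using d det4t by simp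
  have Fp: "(10 + (-6)*real_of_int p0*real_of_int p1 + (-4)*real_of_int p0*real_of_int p2 + 4*real_of_int p0*real_of_int q0 + 2*real_of_int p0*real_of_int q1 + (-2)*real_of_int p0*real_of_int q3 + (-4)*real_of_int p0^2 + (-8)*real_of_int p1*real_of_int p2 + 2*real_of_int p1*real_of_int q0 + 4*real_of_int p1*real_of_int q1 + (-4)*real_of_int p1*real_of_int q3 + (-6)*real_of_int p1^2 + (-6)*real_of_int p2*real_of_int q3 + (-6)*real_of_int p2^2 + (-2)*real_of_int p3*real_of_int q0 + (-4)*real_of_int p3*real_of_int q1 + (-6)*real_of_int p3*real_of_int q2 + (-4)*real_of_int p3^2 + (-4)*real_of_int q0*real_of_int q1 + (-4)*real_of_int q0*real_of_int q2 + (-2)*real_of_int q0*real_of_int q3 + (-2)*real_of_int q0^2 + (-8)*real_of_int q1*real_of_int q2 + (-4)*real_of_int q1*real_of_int q3 + (-4)*real_of_int q1^2 + (-6)*real_of_int q2*real_of_int q3 + (-6)*real_of_int q2^2 + (-4)*real_of_int q3^2) + ((-6) + 2*real_of_int p0*real_of_int p1 + (-2)*real_of_int p0*real_of_int p3 + (-4)*real_of_int p0*real_of_int q0 + (-4)*real_of_int p0*real_of_int q1 + (-4)*real_of_int p0*real_of_int q2 + (-2)*real_of_int p0*real_of_int q3 + 2*real_of_int p0^2 + (-4)*real_of_int p1*real_of_int p3 + (-4)*real_of_int p1*real_of_int q0 + (-8)*real_of_int p1*real_of_int q1 + (-8)*real_of_int p1*real_of_int q2 + (-4)*real_of_int p1*real_of_int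 q3 + 2*real_of_int p1^2 + (-6)*real_of_int p2*real_of_int p3 + (-4)*real_of_int p2*real_of_int q0 + (-8)*real_of_int p2*real_of_int q1 + (-12)*real_of_int p2*real_of_int q2 + (-6)*real_of_int p2*real_of_int q3 + (-2)*real_of_int p3*real_of_int q0 + (-4)*real_of_int p3*real_of_int q1 + (-6)*real_of_int p3*real_of_int q2 + (-8)*real_of_int p3*real_of_int q3 + (-2)*real_of_int q0*real_of_int q1 + (-4)*real_of_int q0*real_of_int q2 + (-4)*real_of_int q0*real_of_int q3 + (-8)*real_of_int q1*real_of_int q2 + (-8)*real_of_int q1*real_of_int q3 + (-2)*real_of_int q1^2 + (-12)*real_of_int q2*real_of_int q3 + (-6)*real_of_int q2^2 + (-4)*real_of_int q3^2) * tau = 0"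
    using Fx[unfolded x0 x1 x2 x3, unfolded EO4[OF tsq, where pa="real_of_int p0" and qa="real_of_int q0" and pb="real_of_int p1" and qb="real_of_int q1" and pc="real_of_int p2" and qc="real_of_int q2" and pd="real_of_int p3" and qd="real_of_int q3"]] .
  have EE: "real_of_int (10 + (-6)*p0*p1 + (-4)*p0*p2 + 4*p0*q0 + 2*p0*q1 + (-2)*p0*q3 + (-4)*p0^2 + (-8)*p1*p2 + 2*p1*q0 + 4*p1*q1 + (-4)*p1*q3 + (-6)*p1^2 + (-6)*p2*q3 + (-6)*p2^2 + (-2)*p3*q0 + (-4)*p3*q1 + (-6)*p3*q2 + (-4)*p3^2 + (-4)*q0*q1 + (-4)*q0*q2 + (-2)*q0*q3 + (-2)*q0^2 + (-8)*q1*q2 + (-4)*q1*q3 + (-4)*q1^2 + (-6)*q2*q3 + (-6)*q2^2 + (-4)*q3^2) = (10 + (-6)*real_of_int p0*real_of_int p1 + (-4)*real_of_int p0*real_of_int p2 + 4*real_of_int p0*real_of_int q0 + 2*real_of_int p0*real_of_int q1 + (-2)*real_of_int p0*real_of_int q3 + (-4)*real_of_int p0^2 + (-8)*real_of_int p1*real_of_int p2 + 2*real_of_int p1*real_of_int q0 + 4*real_of_int p1*real_of_int q1 + (-4)*real_of_int p1*real_of_int q3 + (-6)*real_of_int p1^2 + (-6)*real_of_int p2*real_of_int q3 + (-6)*real_of_int p2^2 + (-2)*real_of_int p3*real_of_int q0 + (-4)*real_of_int p3*real_of_int q1 + (-6)*real_of_int p3*real_of_int q2 + (-4)*real_of_int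 p3^2 + (-4)*real_of_int q0*real_of_int q1 + (-4)*real_of_int q0*real_of_int q2 + (-2)*real_of_int q0*real_of_int q3 + (-2)*real_of_int q0^2 + (-8)*real_of_int q1*real_of_int q2 + (-4)*real_of_int q1*real_of_int q3 + (-4)*real_of_int q1^2 + (-6)*real_of_int q2*real_of_int q3 + (-6)*real_of_int q2^2 + (-4)*real_of_int q3^2)" by simp
  have OO: "real_of_int ((-6) + 2*p0*p1 + (-2)*p0*p3 + (-4)*p0*q0 + (-4)*p0*q1 + (-4)*p0*q2 + (-2)*p0*q3 + 2*p0^2 + (-4)*p1*p3 + (-4)*p1*q0 + (-8)*p1*q1 + (-8)*p1*q2 + (-4)*p1*q3 + 2*p1^2 + (-6)*p2*p3 + (-4)*p2*q0 + (-8)*p2*q1 + (-12)*p2*q2 + (-6)*p2*q3 + (-2)*p3*q0 + (-4)*p3*q1 + (-6)*p3*q2 + (-8)*p3*q3 + (-2)*q0*q1 + (-4)*q0*q2 + (-4)*q0*q3 + (-8)*q1*q2 + (-8)*q1*q3 + (-2)*q1^2 + (-12)*q2*q3 + (-6)*q2^2 + (-4)*q3^2) = ((-6) + 2*real_of_int p0*real_of_int p1 + (-2)*real_of_int p0*real_of_int p3 + (-4)*real_of_int p0*real_of_int q0 + (-4)*real_of_int p0*real_of_int q1 + (-4)*real_of_int p0*real_of_int q2 + (-2)*real_of_int p0*real_of_int q3 + 2*real_of_int p0^2 + (-4)*real_of_int p1*real_of_int p3 + (-4)*real_of_int p1*real_of_int q0 + (-8)*real_of_int p1*real_of_int q1 +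 (-8)*real_of_int p1*real_of_int q2 + (-4)*real_of_int p1*real_of_int q3 + 2*real_of_int p1^2 + (-6)*real_of_int p2*real_of_int p3 + (-4)*real_of_int p2*real_of_int q0 + (-8)*real_of_int p2*real_of_int q1 + (-12)*real_of_int p2*real_of_int q2 + (-6)*real_of_int p2*real_of_int q3 + (-2)*real_of_int p3*real_of_int q0 + (-4)*real_of_int p3*real_of_int q1 + (-6)*real_of_int p3*real_of_int q2 + (-8)*real_of_int p3*real_of_int q3 + (-2)*real_of_int q0*real_of_int q1 + (-4)*real_of_int q0*real_of_int q2 + (-4)*real_of_int q0*real_of_int q3 + (-8)*real_of_int q1*real_of_int q2 + (-8)*real_of_int q1*real_of_int q3 + (-2)*real_of_int q1^2 + (-12)*real_of_int q2*real_of_int q3 + (-6)*real_of_int q2^2 + (-4)*real_of_int q3^2)" by simp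
  have EOi: "(10 + (-6)*p0*p1 + (-4)*p0*p2 + 4*p0*q0 + 2*p0*q1 + (-2)*p0*q3 + (-4)*p0^2 + (-8)*p1*p2 + 2*p1*q0 + 4*p1*q1 + (-4)*p1*q3 + (-6)*p1^2 + (-6)*p2*q3 + (-6)*p2^2 + (-2)*p3*q0 + (-4)*p3*q1 + (-6)*p3*q2 + (-4)*p3^2 + (-4)*q0*q1 + (-4)*q0*q2 + (-2)*q0*q3 + (-2)*q0^2 + (-8)*q1*q2 + (-4)*q1*q3 + (-4)*q1^2 + (-6)*q2*q3 + (-6)*q2^2 + (-4)*q3^2) = 0 \<and> ((-6) + 2*p0*p1 + (-2)*p0*p3 + (-4)*p0*q0 + (-4)*p0*q1 + (-4)*p0*q2 + (-2)*p0*q3 + 2*p0^2 + (-4)*p1*p3 + (-4)*p1*q0 + (-8)*p1*q1 + (-8)*p1*q2 + (-4)*p1*q3 + 2*p1^2 + (-6)*p2*p3 + (-4)*p2*q0 + (-8)*p2*q1 + (-12)*p2*q2 + (-6)*p2*q3 + (-2)*p3*q0 + (-4)*p3*q1 + (-6)*p3*q2 + (-8)*p3*q3 + (-2)*q0*q1 + (-4)*q0*q2 + (-4)*q0*q3 + (-8)*q1*q2 + (-8)*q1*q3 + (-2)*q1^2 + (-12)*q2*q3 + (-6)*q2^2 + (-4)*q3^2) = 0"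
    by (rule tau_irr[OF tsq]) (unfold EE OO, rule Fp)
  have E0: "(10 + (-6)*real_of_int p0*real_of_int p1 + (-4)*real_of_int p0*real_of_int p2 + 4*real_of_int p0*real_of_int q0 + 2*real_of_int p0*real_of_int q1 + (-2)*real_of_int p0*real_of_int q3 + (-4)*real_of_int p0^2 + (-8)*real_of_int p1*real_of_int p2 + 2*real_of_int p1*real_of_int q0 + 4*real_of_int p1*real_of_int q1 + (-4)*real_of_int p1*real_of_int q3 + (-6)*real_of_int p1^2 + (-6)*real_of_int p2*real_of_int q3 + (-6)*real_of_int p2^2 + (-2)*real_of_int p3*real_of_int q0 + (-4)*real_of_int p3*real_of_int q1 + (-6)*real_of_int p3*real_of_int q2 + (-4)*real_of_int p3^2 + (-4)*real_of_int q0*real_of_int q1 + (-4)*real_of_int q0*real_of_int q2 + (-2)*real_of_int q0*real_of_int q3 + (-2)*real_of_int q0^2 + (-8)*real_of_int q1*real_of_int q2 + (-4)*real_of_int q1*real_of_int q3 + (-4)*real_of_int q1^2 + (-6)*real_of_int q2*real_of_int q3 + (-6)*real_of_int q2^2 + (-4)*real_of_int q3^2) = 0" using EOi EE by simp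
  have O0: "((-6) + 2*real_of_int p0*real_of_int p1 + (-2)*real_of_int p0*real_of_int p3 + (-4)*real_of_int p0*real_of_int q0 + (-4)*real_of_int p0*real_of_int q1 + (-4)*real_of_int p0*real_of_int q2 + (-2)*real_of_int p0*real_of_int q3 + 2*real_of_int p0^2 + (-4)*real_of_int p1*real_of_int p3 + (-4)*real_of_int p1*real_of_int q0 + (-8)*real_of_int p1*real_of_int q1 + (-8)*real_of_int p1*real_of_int q2 + (-4)*real_of_int p1*real_of_int q3 + 2*real_of_int p1^2 + (-6)*real_of_int p2*real_of_int p3 + (-4)*real_of_int p2*real_of_int q0 + (-8)*real_of_int p2*real_of_int q1 + (-12)*real_of_int p2*real_of_int q2 + (-6)*real_of_int p2*real_of_int q3 + (-2)*real_of_int p3*real_of_int q0 + (-4)*real_of_int p3*real_of_int q1 + (-6)*real_of_int p3*real_of_int q2 + (-8)*real_of_int p3*real_of_int q3 + (-2)*real_of_int q0*real_of_int q1 + (-4)*real_of_int q0*real_of_int q2 + (-4)*real_of_int q0*real_of_int q3 + (-8)*real_of_int q1*real_of_int q2 + (-8)*real_of_int q1*real_of_int q3 + (-2)*real_of_int q1^2 + (-12)*real_of_int q2*real_of_int q3 + (-6)*real_of_int q2^2 + (-4)*real_of_int q3^2) = 0" using EOi OO by simp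
  have Fb: "(4 + 6*tau + (-2)*tau*(real_of_int p0 + real_of_int q0*(1-tau))*(real_of_int p1 + real_of_int q1*(1-tau)) + 2*tau*(real_of_int p0 + real_of_int q0*(1-tau))*(real_of_int p3 + real_of_int q3*(1-tau)) + (-2)*tau*(real_of_int p0 + real_of_int q0*(1-tau))^2 + 4*tau*(real_of_int p1 + real_of_int q1*(1-tau))*(real_of_int p3 + real_of_int q3*(1-tau)) + (-2)*tau*(real_of_int p1 + real_of_int q1*(1-tau))^2 + 6*tau*(real_of_int p2 + real_of_int q2*(1-tau))*(real_of_int p3 + real_of_int q3*(1-tau)) + (-4)*(real_of_int p0 + real_of_int q0*(1-tau))*(real_of_int p1 + real_of_int q1*(1-tau)) + (-4)*(real_of_int p0 + real_of_int q0*(1-tau))*(real_of_int p2 + real_of_int q2*(1-tau)) + (-2)*(real_of_int p0 + real_of_int q0*(1-tau))*(real_of_int p3 + real_of_int q3*(1-tau)) + (-2)*(real_of_int p0 + real_of_int q0*(1-tau))^2 + (-8)*(real_of_int p1 + real_of_int q1*(1-tau))*(real_of_int p2 + real_of_int q2*(1-tau)) + (-4)*(real_of_int p1 + real_of_int q1*(1-tau))*(real_of_int p3 + real_of_int q3*(1-tau)) + (-4)*(real_of_int p1 + real_of_int q1*(1-tau))^2 + (-6)*(real_of_int p2 + real_of_int q2*(1-tau))*(real_of_int p3 + real_of_int q3*(1-tau)) + (-6)*(real_of_int p2 + real_of_int q2*(1-tau))^2 + (-4)*(real_of_int p3 + real_of_int q3*(1-tau))^2) = 0"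
    using EOc4[OF tsq, where pa="real_of_int p0" and qa="real_of_int q0" and pb="real_of_int p1" and qb="real_of_int q1" and pc="real_of_int p2" and qc="real_of_int q2" and pd="real_of_int p3" and qd="real_of_int q3"] unfolding E0 O0 by simp
  have QX: "(10 + (-6)*tau) - 0 = (4 + (-2)*tau) * (a$0*a$0) + (6 + (-2)*tau) * (a$0*a$1) + (4 + 0*tau) * (a$0*a$2) + (0 + 2*tau) * (a$0*a$3) + (6 + (-2)*tau) * (a$1*a$1) + (8 + 0*tau) * (a$1*a$2) + (0 + 4*tau) * (a$1*a$3) + (6 + 0*tau) * (a$2*a$2) + (0 + 6*tau) * (a$2*a$3) + (4 + 0*tau) * (a$3*a$3)"
    using QX4[where t=tau and xa="a$0" and xb="a$1" and xc="a$2" and xd="a$3"] unfolding Fx .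
  have T0: "0 \<le> (4 + (-2)*tau) * (a$0*a$0)"
    by (intro mult_nonneg_nonneg mult_nonpos_nonpos) (use t1 t2 n0 n0 in linarith)+
  have T1: "0 \<le> (6 + (-2)*tau) * (a$0*a$1)"
    by (intro mult_nonneg_nonneg mult_nonpos_nonpos) (use t1 t2 n0 n1 in linarith)+
  have T2: "0 \<le> (4 + 0*tau) * (a$0*a$2)"
    by (intro mult_nonneg_nonneg mult_nonpos_nonpos) (use t1 t2 n0 n2 in linarith)+
  have T3: "0 \<le> (0 + 2*tau) * (a$0*a$3)"
    by (intro mult_nonneg_nonneg mult_nonpos_nonpos) (use t1 t2 n0 n3 in linarith)+
  have T4: "0 \<le> (6 + (-2)*tau) * (a$1*a$1)"
    by (intro mult_nonneg_nonneg mult_nonpos_nonpos) (use t1 t2 n1 n1 in linarith)+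
  have T5: "0 \<le> (8 + 0*tau) * (a$1*a$2)"
    by (intro mult_nonneg_nonneg mult_nonpos_nonpos) (use t1 t2 n1 n2 in linarith)+
  have T6: "0 \<le> (0 + 4*tau) * (a$1*a$3)"
    by (intro mult_nonneg_nonneg mult_nonpos_nonpos) (use t1 t2 n1 n3 in linarith)+
  have T7: "0 \<le> (6 + 0*tau) * (a$2*a$2)"
    by (intro mult_nonneg_nonneg mult_nonpos_nonpos) (use t1 t2 n2 n2 in linarith)+
  have T8: "0 \<le> (0 + 6*tau) * (a$2*a$3)"
    by (intro mult_nonneg_nonneg mult_nonpos_nonpos) (use t1 t2 n2 n3 in linarith)+
  have T9: "0 \<le> (4 + 0*tau) * (a$3*a$3)"
    by (intro mult_nonneg_nonneg mult_nonpos_nonpos) (use t1 t2 n3 n3 in linarith)+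
  have bx0: "a$0*a$0 \<le> (9/10)"
  proof (rule bnd[of "(4 + (-2)*tau)" _ "(10 + (-6)*tau)"])
    show "(4 + (-2)*tau) * (a$0*a$0) \<le> (10 + (-6)*tau)" using QX T0 T1 T2 T3 T4 T5 T6 T7 T8 T9 by linarith
  qed (use t1 t2 in \<open>(simp add: algebra_simps)?; linarith\<close>)+
  have bx1: "a$1*a$1 \<le> (1/5)"
  proof (rule bnd[of "(6 + (-2)*tau)" _ "(10 + (-6)*tau)"])
    show "(6 + (-2)*tau) * (a$1*a$1) \<le> (10 + (-6)*tau)" using QX T0 T1 T2 T3 T4 T5 T6 T7 T8 T9 by linarith
  qed (use t1 t2 in \<open>(simp add: algebra_simps)?; linarith\<close>)+
  have bx2: "a$2*a$2 \<le> (1/5)"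
  proof (rule bnd[of "(6 + 0*tau)" _ "(10 + (-6)*tau)"])
    show "(6 + 0*tau) * (a$2*a$2) \<le> (10 + (-6)*tau)" using QX T0 T1 T2 T3 T4 T5 T6 T7 T8 T9 by linarith
  qed (use t1 t2 in \<open>(simp add: algebra_simps)?; linarith\<close>)+
  have bx3: "a$3*a$3 \<le> (1/5)"
  proof (rule bnd[of "(4 + 0*tau)" _ "(10 + (-6)*tau)"])
    show "(4 + 0*tau) * (a$3*a$3) \<le> (10 + (-6)*tau)" using QX T0 T1 T2 T3 T4 T5 T6 T7 T8 T9 by linarith
  qed (use t1 t2 in \<open>(simp add: algebra_simps)?; linarith\<close>)+
  have by0: "(real_of_int p0 + real_of_int q0*(1-tau)) * (real_of_int p0 + real_of_int q0*(1-tau)) \<le> 4"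
  proof -
    note S = SOS4_0[OF tsq, where xa="real_of_int p0 + real_of_int q0*(1-tau)" and xb="real_of_int p1 + real_of_int q1*(1-tau)" and xc="real_of_int p2 + real_of_int q2*(1-tau)" and xd="real_of_int p3 + real_of_int q3*(1-tau)", unfolded Fb]
    show ?thesis by (rule sosb3[OF S]) (use t1 t2 in \<open>(simp add: algebra_simps)?; linarith\<close>)+
  qed
  have by1: "(real_of_int p1 + real_of_int q1*(1-tau)) * (real_of_int p1 + real_of_int q1*(1-tau)) \<le> 4"
  proof -
    note S = SOS4_1[OF tsq, where xa="real_of_int p0 + real_of_int q0*(1-tau)" and xb="real_of_int p1 + real_of_int q1*(1-tau)" and xc="real_of_int p2 + real_of_int q2*(1-tau)" and xd="real_of_int p3 + real_of_int q3*(1-tau)", unfolded Fb]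
    show ?thesis by (rule sosb3[OF S]) (use t1 t2 in \<open>(simp add: algebra_simps)?; linarith\<close>)+
  qed
  have by2: "(real_of_int p2 + real_of_int q2*(1-tau)) * (real_of_int p2 + real_of_int q2*(1-tau)) \<le> 4"
  proof -
    note S = SOS4_2[OF tsq, where xa="real_of_int p0 + real_of_int q0*(1-tau)" and xb="real_of_int p1 + real_of_int q1*(1-tau)" and xc="real_of_int p2 + real_of_int q2*(1-tau)" and xd="real_of_int p3 + real_of_int q3*(1-tau)", unfolded Fb]
    show ?thesis by (rule sosb3[OF S]) (use t1 t2 in \<open>(simp add: algebra_simps)?; linarith\<close>)+
  qed
  have by3: "(real_of_int p3 + real_of_int q3*(1-tau)) * (real_of_int p3 + real_of_int q3*(1-tau)) \<le> 4"
  proof -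
    note S = SOS4_3[OF tsq, where xa="real_of_int p0 + real_of_int q0*(1-tau)" and xb="real_of_int p1 + real_of_int q1*(1-tau)" and xc="real_of_int p2 + real_of_int q2*(1-tau)" and xd="real_of_int p3 + real_of_int q3*(1-tau)", unfolded Fb]
    show ?thesis by (rule sosb3[OF S]) (use t1 t2 in \<open>(simp add: algebra_simps)?; linarith\<close>)+
  qed
  have C0: "(p0 = 0 \<and> q0 = 0) \<or> (p0 = 1 \<and> q0 = -1)"
    by (rule cand2[OF t1 t2]) (use n0 bx0 by0 x0 in auto)
  have C1: "p1 = 0 \<and> q1 = 0"
    by (rule cand1[OF t1 t2]) (use n1 bx1 by1 x1 in auto)
  have C2: "p2 = 0 \<and> q2 = 0"
    by (rule cand1[OF t1 t2]) (use n2 bx2 by2 x2 in auto)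
  have C3: "p3 = 0 \<and> q3 = 0"
    by (rule cand1[OF t1 t2]) (use n3 bx3 by3 x3 in auto)
  have R: "p0 = 1 \<and> q0 = -1 \<and> p1 = 0 \<and> q1 = 0 \<and> p2 = 0 \<and> q2 = 0 \<and> p3 = 0 \<and> q3 = 0" using C0 C1 C2 C3 EOi by auto
  have "a = vec_of_list [tau', 0, 0, 0]"
  proof (rule eq_vecI)
    show "dim_vec a = dim_vec (vec_of_list [tau', 0, 0, 0])" using acar by simp
  next
    fix i assume "i < dim_vec (vec_of_list [tau', 0, 0, 0])"
    then have "i < 4" by simp
    then have "i = 0 \<or> i = 1 \<or> i = 2 \<or> i = 3" by linarith
    then show "a $ i = vec_of_list [tau', 0, 0, 0] $ i"
      using R x0 x1 x2 x3 by (auto simp del: vec_of_list_Cons simp: vec_of_list_index taup)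
  qed
  then show "a \<in> {vec_of_list [tau', 0, 0, 0]}" by simp
next
  fix a assume "a \<in> {vec_of_list [tau', 0, 0, 0]}"
  then have a: "a = vec_of_list [tau', 0, 0, 0]" by simp
  have "det (bordered A4 a) = 0"
    unfolding det4t unfolding a by (simp del: vec_of_list_Cons add: vec_of_list_index taup) (simp add: algebra_simps power2_eq_square power3_eq_cube ttau tsq)
  moreover have "\<forall>i<4. a$i \<in> Ztau_neg"
  proof (intro allI impI)
    fix i :: nat assume "i < 4"
    then have "i = 0 \<or> i = 1 \<or> i = 2 \<or> i = 3" by linarith
    then show "a$i \<in> Ztau_neg" unfolding a using Ztau_neg_0 Ztau_neg_tau' by (auto simp del: vec_of_list_Cons simp: vec_of_list_index)
  qed
  moreover have "a \<in> carrier_vec 4" unfolding a carrier_vec_def by (simp del: vec_of_list_Cons)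
  ultimately show "a \<in> affine_solutions A4 4" unfolding affine_solutions_def by blast
qed

theorem mainTheorem1:
  shows "affine_solutions A2 2 = {vec_of_list [tau', tau']}
       \<and> affine_solutions A3 3 = {vec_of_list [0, tau', 0]}
       \<and> affine_solutions A4 4 = {vec_of_list [tau', 0, 0, 0]}"
  by (intro conjI part2 part3 part4)

end
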